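(* There exist a game $\Gamma$ and a principal utility function $U_0$ such that the optimal principal objective value over all $0$-CEPs of $\Gamma$ is strictly greater than the optimal objective value over those $0$-CEPs $(\mu,P)$ in which each $P_i(s,a)$ depends only on $a$ (and not on the signal profile $s$).
   Context: $\Gamma$ has agents $i\in[n]$, finite action sets $A_i$, $A=\prod_iA_i$, utilities $U_i:A\to\mathbb{R}$; principal utility $U_0$ on $A$ (values may be real or $-\infty$). A correlated profile with payments is $(\mu,P)$ with $\mu\in\Delta(A)$, $P_i:A\times A\to\mathbb{R}_+$ ($P_i(s,a)$ = payment to $i$ under recommendation $s$ and played profile $a$). Its objective value is $\mathbb{E}_{a\sim\mu}[U_0(a)-\sum_iP_i(a,a)]$. It is a $0$-CEP if for every $i$ and $\phi_i:A_i\to A_i$, $\mathbb{E}_{a\sim\mu}[U_i(\phi_i(a_i),a_{-i})+P_i(a,(\phi_i(a_i),a_{-i}))-U_i(a)-P_i(a,a)]\le0$. *)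

theory Defs
  imports "HOL-Analysis.Analysis"
begin

text \<open>Agents are 0..n-1; actions are encoded as naturals; agent i has action set
  Act i; action profiles are extensional functions in PiE {..<n} Act.\<close>

type_synonym profile = "nat \<Rightarrow> nat"

definition profiles :: "nat \<Rightarrow> (nat \<Rightarrow> nat set) \<Rightarrow> profile set" where
  "profiles n Act = PiE {..<n} Act"

definition is_game :: "nat \<Rightarrow> (nat \<Rightarrow> nat set) \<Rightarrow> bool" where
  "is_game n Act \<longleftrightarrow> (\<forall>i<n. finite (Act i) \<and> Act i \<noteq> {})"

text \<open>(mu, P) is a correlated profile with payments: mu a probability distribution
  on profiles, P i s a \<ge> 0 the payment to i under recommendation s and play a.\<close>
definition is_cpp ::
  "nat \<Rightarrow> (nat \<Rightarrow> nat set) \<Rightarrow> (profile \<Rightarrow> real) \<Rightarrow> (nat \<Rightarrow> profile \<Rightarrow> profile \<Rightarrow> real) \<Rightarrow> bool" where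
  "is_cpp n Act mu P \<longleftrightarrow>
     (\<forall>a\<in>profiles n Act. mu a \<ge> 0) \<and> (\<Sum>a\<in>profiles n Act. mu a) = 1 \<and>
     (\<forall>i<n. \<forall>s\<in>profiles n Act. \<forall>a\<in>profiles n Act. P i s a \<ge> 0)"

definition is_0CEP ::
  "nat \<Rightarrow> (nat \<Rightarrow> nat set) \<Rightarrow> (nat \<Rightarrow> profile \<Rightarrow> real) \<Rightarrow>
   (profile \<Rightarrow> real) \<Rightarrow> (nat \<Rightarrow> profile \<Rightarrow> profile \<Rightarrow> real) \<Rightarrow> bool" where
  "is_0CEP n Act U mu P \<longleftrightarrow> is_cpp n Act mu P \<and>
     (\<forall>i<n. \<forall>phi. phi ` Act i \<subseteq> Act i \<longrightarrow>
        (\<Sum>a\<in>profiles n Act. mu a *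
            (U i (a(i := phi (a i))) + P i a (a(i := phi (a i))) - U i a - P i a a)) \<le> 0)"

text \<open>Objective E_mu[U0(a) - sum_i P_i(a,a)], in extended reals (U0 may be -\<infinity>;
  zero-probability profiles contribute 0).\<close>
definition objective ::
  "nat \<Rightarrow> (nat \<Rightarrow> nat set) \<Rightarrow> (profile \<Rightarrow> ereal) \<Rightarrow>
   (profile \<Rightarrow> real) \<Rightarrow> (nat \<Rightarrow> profile \<Rightarrow> profile \<Rightarrow> real) \<Rightarrow> ereal" where
  "objective n Act U0 mu P =
     (\<Sum>a\<in>profiles n Act. ereal (mu a) * (U0 a - ereal (\<Sum>i<n. P i a a)))"

definition signal_independent ::
  "nat \<Rightarrow> (nat \<Rightarrow> nat set) \<Rightarrow> (nat \<Rightarrow> profile \<Rightarrow> profile \<Rightarrow> real) \<Rightarrow> bool" where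
  "signal_independent n Act P \<longleftrightarrow>
     (\<forall>i<n. \<forall>s\<in>profiles n Act. \<forall>s'\<in>profiles n Act. \<forall>a\<in>profiles n Act. P i s a = P i s' a)"

definition opt_value where
  "opt_value n Act U U0 = (SUP (mu, P) \<in> {(mu, P). is_0CEP n Act U mu P}. objective n Act U0 mu P)"

definition opt_value_sigind where
  "opt_value_sigind n Act U U0 =
     (SUP (mu, P) \<in> {(mu, P). is_0CEP n Act U mu P \<and> signal_independent n Act P}.
        objective n Act U0 mu P)"

end

theory Submission
  imports Defs
begin

definition mk :: "nat \<Rightarrow> nat \<Rightarrow> profile" where
  "mk x y = (\<lambda>k. if k = 0 then x else if k = (1::nat) then y else undefined)"

lemma mk_app[simp]: "mk x y 0 = x" "mk x y (Suc 0) = y"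
  by (auto simp: mk_def)

lemma mk_upd[simp]: "(mk x y)(0 := z) = mk z y" "(mk x y)(Suc 0 := z) = mk x z"
  by (auto simp: mk_def fun_eq_iff)

lemma mk_inj[simp]: "mk x y = mk x' y' \<longleftrightarrow> x = x' \<and> y = y'"
  by (metis mk_app)

definition Act2 :: "nat \<Rightarrow> nat set" where "Act2 = (\<lambda>_. {0,1})"

lemma lessTwo: "i < (2::nat) \<longleftrightarrow> i = 0 \<or> i = 1" by arith

lemma mk_mem: "x \<in> {0,1} \<Longrightarrow> y \<in> {0,1} \<Longrightarrow> mk x y \<in> profiles 2 Act2"
  unfolding profiles_def Act2_def PiE_iff extensional_def Ball_def lessThan_iff lessTwo
  by (simp add: mk_def)

lemma prof_eq: assumes f: "f \<in> profiles 2 Act2" shows "f = mk (f 0) (f 1)"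
proof
  fix k
  have ext: "f k = undefined" if "k \<ge> 2"
    using f that unfolding profiles_def PiE_iff extensional_def by simp
  have "k = 0 \<or> k = 1 \<or> k \<ge> 2" by arith
  then show "f k = mk (f 0) (f 1) k"
  proof (elim disjE)
    assume "k \<ge> 2" then show ?thesis using ext by (simp add: mk_def)
  qed (simp_all add: mk_def)
qed

lemma profiles2: "profiles 2 Act2 = {mk 0 0, mk 0 1, mk 1 0, mk 1 1}"
proof
  show "profiles 2 Act2 \<subseteq> {mk 0 0, mk 0 1, mk 1 0, mk 1 1}"
  proof
    fix f assume f: "f \<in> profiles 2 Act2"
    have "f 0 \<in> Act2 0" "f 1 \<in> Act2 1" using f unfolding profiles_def PiE_iff by simp_all
    then have h: "f 0 = 0 \<or> f 0 = 1" "f 1 = 0 \<or> f 1 = 1" by (simp_all add: Act2_def)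
    have "mk (f 0) (f 1) \<in> {mk 0 0, mk 0 1, mk 1 0, mk 1 1}" using h by auto
    then show "f \<in> {mk 0 0, mk 0 1, mk 1 0, mk 1 1}" by (simp only: prof_eq[OF f, symmetric])
  qed
next
  show "{mk 0 0, mk 0 1, mk 1 0, mk 1 1} \<subseteq> profiles 2 Act2"
    using mk_mem by simp
qed

lemma key:
  fixes a b c Q00 Q10 Q11 Q01 R00 R10 R11 R01 :: real
  assumes "a \<ge> 0" "b \<ge> 0" "c \<ge> 0" "a + b + c = 1"
    "Q00 \<ge> 0" "Q10 \<ge> 0" "Q11 \<ge> 0" "Q01 \<ge> 0" "R00 \<ge> 0" "R10 \<ge> 0" "R11 \<ge> 0" "R01 \<ge> 0"
    and i1: "a * (1 + Q10 - Q00) \<le> 0"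
    and i2: "b * (Q00 - 1 - Q10) + c * (1 + Q01 - Q11) \<le> 0"
    and i3: "a * (R01 - 1 - R00) + b * (1 + R11 - R10) \<le> 0"
  shows "a*Q00 + b*Q10 + c*Q11 + a*R00 + b*R10 + c*R11 \<ge> 1/2"
proof -
  have p: "a*Q10 \<ge> 0" "a*R00 \<ge> 0" "c*Q01 \<ge> 0" "b*R11 \<ge> 0" "a*R01 \<ge> 0" "c*R11 \<ge> 0"
    "b*Q00 \<ge> 0" "b*Q10 \<ge> 0" "a*Q00 \<ge> 0" "b*R10 \<ge> 0" "c*Q11 \<ge> 0"
    using assms by auto
  have i2': "b*Q00 - b - b*Q10 + c + c*Q01 - c*Q11 \<le> 0" using i2 by (simp add: algebra_simps)
  have i3': "a*R01 - a - a*R00 + b + b*R11 - b*R10 \<le> 0" using i3 by (simp add: algebra_simps)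
  have i1': "a + a*Q10 - a*Q00 \<le> 0" using i1 by (simp add: algebra_simps)
  show ?thesis
  proof (cases "a = 0")
    case True
    have h1: "b + c = 1" using True assms(4) by simp
    have h2: "b*R10 \<ge> b" using i3' True p by simp
    have h3: "b*Q10 + c*Q11 \<ge> c - b" using i2' p by linarith
    show ?thesis using h1 h2 h3 p by linarith
  next
    case False
    then have "a > 0" using assms by auto
    then have "Q00 - 1 - Q10 \<ge> 0" using i1 by (simp add: mult_le_0_iff)
    then have "b * (Q00 - 1 - Q10) \<ge> 0" using assms by auto
    then have "b*Q00 - b - b*Q10 \<ge> 0" by (simp add: algebra_simps)
    then show ?thesis using p i1' i2' i3' assms(4) by linarith
  qed
qed

definition Ug :: "nat \<Rightarrow> profile \<Rightarrow> real" where
  "Ug i a = (if i = 0 then (if a 0 \<noteq> a 1 then 1 else 0) else (if a 0 = a 1 then 1 else 0))"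

definition U0g :: "profile \<Rightarrow> ereal" where
  "U0g a = (if a = mk 0 1 then -\<infinity> else 1)"

definition muw :: "profile \<Rightarrow> real" where
  "muw a = (if a = mk 0 1 then 0 else 1/3)"

definition Pw :: "nat \<Rightarrow> profile \<Rightarrow> profile \<Rightarrow> real" where
  "Pw i s a = (if i = 0 \<and> s = mk 0 0 \<and> a = mk 0 0 then 1 else 0)"

lemma sum4: "(\<Sum>a\<in>profiles 2 Act2. f a) = f (mk 0 0) + f (mk 0 1) + f (mk 1 0) + f (mk 1 1)"
  by (simp add: profiles2 add.assoc)

lemma witness: "is_0CEP 2 Act2 Ug muw Pw"
proof -
  have cpp: "is_cpp 2 Act2 muw Pw"
    unfolding is_cpp_def by (auto simp: sum4 muw_def Pw_def)
  have ic: "(\<Sum>a\<in>profiles 2 Act2. muw a *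
            (Ug i (a(i := phi (a i))) + Pw i a (a(i := phi (a i))) - Ug i a - Pw i a a)) \<le> 0"
    if "i < 2" "phi ` Act2 i \<subseteq> Act2 i" for i phi
  proof -
    have "phi 0 \<in> {0,1}" "phi 1 \<in> {0,1}" using that(2) by (auto simp: Act2_def)
    then show ?thesis using that(1)
      by (auto simp: sum4 lessTwo muw_def Pw_def Ug_def)
  qed
  show ?thesis unfolding is_0CEP_def using cpp ic by blast
qed

lemma obj_witness: "objective 2 Act2 U0g muw Pw = ereal (2/3)"
proof -
  have z: "(1::ereal) - ereal 1 = 0" by (simp add: one_ereal_def)
  have "ereal (1/3) + ereal (1/3) = ereal (2/3)" by simp
  then show ?thesis by (simp add: objective_def sum4 U0g_def muw_def Pw_def z)
qed

lemma bound:
  assumes "is_0CEP 2 Act2 Ug mu P" "signal_independent 2 Act2 P"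
  shows "objective 2 Act2 U0g mu P \<le> ereal (1/2)"
proof -
  have cpp: "is_cpp 2 Act2 mu P" using assms(1) by (simp add: is_0CEP_def)
  have ic: "\<And>i phi. i < 2 \<Longrightarrow> phi ` Act2 i \<subseteq> Act2 i \<Longrightarrow>
        (\<Sum>a\<in>profiles 2 Act2. mu a *
            (Ug i (a(i := phi (a i))) + P i a (a(i := phi (a i))) - Ug i a - P i a a)) \<le> 0"
    using assms(1) unfolding is_0CEP_def by blast
  have mem: "mk 0 0 \<in> profiles 2 Act2" "mk 0 1 \<in> profiles 2 Act2" "mk 1 0 \<in> profiles 2 Act2"
     "mk 1 1 \<in> profiles 2 Act2" by (auto simp: profiles2)
  have si: "\<And>i s t. i < 2 \<Longrightarrow> s \<in> profiles 2 Act2 \<Longrightarrow> t \<in> profiles 2 Act2 \<Longrightarrow> P i s t = P i t t"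
    using assms(2) unfolding signal_independent_def by blast
  have nn: "\<And>a. a \<in> profiles 2 Act2 \<Longrightarrow> mu a \<ge> 0" using cpp by (simp add: is_cpp_def)
  have Pnn: "\<And>i s a. i < 2 \<Longrightarrow> s \<in> profiles 2 Act2 \<Longrightarrow> a \<in> profiles 2 Act2 \<Longrightarrow> P i s a \<ge> 0"
    using cpp by (simp add: is_cpp_def)
  have s1: "mu (mk 0 0) + mu (mk 0 1) + mu (mk 1 0) + mu (mk 1 1) = 1"
    using cpp by (simp add: is_cpp_def sum4)
  show ?thesis
  proof (cases "mu (mk 0 1) = 0")
    case False
    then have pos: "mu (mk 0 1) > 0" using nn[OF mem(2)] by simp
    show ?thesis
      using pos by (simp add: objective_def sum4 U0g_def one_ereal_def)
  next
    case True
    define a where "a = mu (mk 0 0)"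
    define b where "b = mu (mk 1 0)"
    define c where "c = mu (mk 1 1)"
    define Q00 where "Q00 = P 0 (mk 0 0) (mk 0 0)"
    define Q10 where "Q10 = P 0 (mk 1 0) (mk 1 0)"
    define Q11 where "Q11 = P 0 (mk 1 1) (mk 1 1)"
    define Q01 where "Q01 = P 0 (mk 0 1) (mk 0 1)"
    define R00 where "R00 = P 1 (mk 0 0) (mk 0 0)"
    define R10 where "R10 = P 1 (mk 1 0) (mk 1 0)"
    define R11 where "R11 = P 1 (mk 1 1) (mk 1 1)"
    define R01 where "R01 = P 1 (mk 0 1) (mk 0 1)"
    have i1: "a * (1 + Q10 - Q00) \<le> 0"
    proof -
      have "(\<lambda>_. 1::nat) ` Act2 0 \<subseteq> Act2 0" by (auto simp: Act2_def)
      note ic[of 0 "\<lambda>_. 1", OF _ this]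
      then show ?thesis using True si[of 0, OF _ mem(1) mem(3)]
        by (simp add: sum4 Ug_def a_def Q10_def Q00_def)
    qed
    have i2: "b * (Q00 - 1 - Q10) + c * (1 + Q01 - Q11) \<le> 0"
    proof -
      have "(\<lambda>_. 0::nat) ` Act2 0 \<subseteq> Act2 0" by (auto simp: Act2_def)
      note ic[of 0 "\<lambda>_. 0", OF _ this]
      then show ?thesis using True si[of 0, OF _ mem(3) mem(1)] si[of 0, OF _ mem(4) mem(2)]
        by (simp add: sum4 Ug_def b_def c_def Q10_def Q00_def Q01_def Q11_def)
    qed
    have i3: "a * (R01 - 1 - R00) + b * (1 + R11 - R10) \<le> 0"
    proof -
      have "(\<lambda>_. 1::nat) ` Act2 1 \<subseteq> Act2 1" by (auto simp: Act2_def)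
      note ic[of 1 "\<lambda>_. 1", OF _ this]
      then show ?thesis using True si[of 1, OF _ mem(1) mem(2)] si[of 1, OF _ mem(3) mem(4)]
        by (simp add: sum4 Ug_def a_def b_def R10_def R00_def R01_def R11_def)
    qed
    have k: "a*Q00 + b*Q10 + c*Q11 + a*R00 + b*R10 + c*R11 \<ge> 1/2"
      apply (rule key[OF _ _ _ _ _ _ _ _ _ _ _ _ i1 i2 i3])
      using nn[OF mem(1)] nn[OF mem(3)] nn[OF mem(4)] s1 True
        Pnn[of 0, OF _ mem(1) mem(1)] Pnn[of 0, OF _ mem(2) mem(2)] Pnn[of 0, OF _ mem(3) mem(3)]
        Pnn[of 0, OF _ mem(4) mem(4)]
        Pnn[of 1, OF _ mem(1) mem(1)] Pnn[of 1, OF _ mem(2) mem(2)] Pnn[of 1, OF _ mem(3) mem(3)]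
        Pnn[of 1, OF _ mem(4) mem(4)]
      by (auto simp: a_def b_def c_def Q00_def Q10_def Q11_def Q01_def R00_def R10_def R11_def R01_def)
    have "objective 2 Act2 U0g mu P =
        ereal (a * (1 - (Q00 + R00)) + b * (1 - (Q10 + R10)) + c * (1 - (Q11 + R11)))"
      unfolding objective_def sum4 using True
      by (simp add: U0g_def a_def b_def c_def Q00_def Q10_def Q11_def
          R00_def R10_def R11_def numeral_2_eq_2 lessThan_Suc one_ereal_def add.commute)
    also have "\<dots> \<le> ereal (1/2)"
      using k s1 True by (simp add: a_def b_def c_def algebra_simps)
    finally show ?thesis .
  qed
qed

theorem proposition7p4:
  shows "\<exists>n Act (U :: nat \<Rightarrow> profile \<Rightarrow> real) (U0 :: profile \<Rightarrow> ereal).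
           is_game n Act \<and> (\<forall>a\<in>profiles n Act. U0 a \<noteq> \<infinity>) \<and>
           opt_value_sigind n Act U U0 < opt_value n Act U U0"
proof (intro exI conjI)
  show "is_game 2 Act2" by (simp add: is_game_def Act2_def)
  show "\<forall>a\<in>profiles 2 Act2. U0g a \<noteq> \<infinity>" by (simp add: U0g_def)
  have A: "opt_value_sigind 2 Act2 Ug U0g \<le> ereal (1/2)"
    unfolding opt_value_sigind_def
    by (rule SUP_least) (auto intro: bound)
  have B: "ereal (2/3) \<le> opt_value 2 Act2 Ug U0g"
    unfolding opt_value_def
  proof -
    have "(muw, Pw) \<in> {(mu, P). is_0CEP 2 Act2 Ug mu P}" using witness by simp
    then have "(case (muw, Pw) of (mu, P) \<Rightarrow> objective 2 Act2 U0g mu P)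
       \<le> (SUP (mu, P) \<in> {(mu, P). is_0CEP 2 Act2 Ug mu P}. objective 2 Act2 U0g mu P)"
      by (rule SUP_upper)
    then show "ereal (2/3) \<le> (SUP (mu, P) \<in> {(mu, P). is_0CEP 2 Act2 Ug mu P}. objective 2 Act2 U0g mu P)"
      by (simp add: obj_witness)
  qed
  show "opt_value_sigind 2 Act2 Ug U0g < opt_value 2 Act2 Ug U0g"
  proof -
    have "ereal (1/2) < ereal (2/3)" by simp
    then show ?thesis using A B by (meson order.strict_trans1 order.strict_trans2)
  qed
qed

end
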